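(* Let $A$ be a $C^*$-algebra with real rank zero and let $E$ be a finite dimensional $C^*$-subalgebra of $A$ with the same unit as $A$. Then $B=A\cap E'$ also has real rank zero.
   Context: $E'$ denotes the commutant of $E$, so $A\cap E'=\{a\in A: ae=ea\text{ for all }e\in E\}$. *)

theory Defs
  imports "HOL-Analysis.Analysis"
begin

class cstar_algebra = real_normed_algebra_1 + banach +
  fixes scaleC :: "complex \<Rightarrow> 'a \<Rightarrow> 'a"
    and adj :: "'a \<Rightarrow> 'a"
  assumes scaleC_add_right: "scaleC c (x + y) = scaleC c x + scaleC c y"
    and scaleC_add_left: "scaleC (c + d) x = scaleC c x + scaleC d x"
    and scaleC_scaleC: "scaleC c (scaleC d x) = scaleC (c * d) x"
    and scaleC_one: "scaleC 1 x = x"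
    and scaleR_scaleC: "scaleR r x = scaleC (complex_of_real r) x"
    and scaleC_mult_left: "scaleC c x * y = scaleC c (x * y)"
    and scaleC_mult_right: "x * scaleC c y = scaleC c (x * y)"
    and norm_scaleC: "norm (scaleC c x) = cmod c * norm x"
    and adj_adj: "adj (adj x) = x"
    and adj_add: "adj (x + y) = adj x + adj y"
    and adj_scaleC: "adj (scaleC c x) = scaleC (cnj c) (adj x)"
    and adj_mult: "adj (x * y) = adj y * adj x"
    and cstar_identity: "norm (adj x * x) = (norm x)\<^sup>2"

definition cstar_subalgebra :: "'a::cstar_algebra set \<Rightarrow> bool" where
  "cstar_subalgebra E \<longleftrightarrow>
     0 \<in> E \<and> (\<forall>x\<in>E. \<forall>y\<in>E. x + y \<in> E \<and> x * y \<in> E) \<and>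
     (\<forall>c. \<forall>x\<in>E. scaleC c x \<in> E) \<and> (\<forall>x\<in>E. adj x \<in> E) \<and> closed E"

definition cspan :: "'a::cstar_algebra set \<Rightarrow> 'a set" where
  "cspan F = {\<Sum>x\<in>F. scaleC (c x) x | c. True}"

definition finite_dim :: "'a::cstar_algebra set \<Rightarrow> bool" where
  "finite_dim E \<longleftrightarrow> (\<exists>F. finite F \<and> E \<subseteq> cspan F)"

definition commutant :: "'a::cstar_algebra set \<Rightarrow> 'a set" where
  "commutant E = {a. \<forall>e\<in>E. a * e = e * a}"

text \<open>Real rank zero (Brown--Pedersen) for a unital C*-algebra S with unit 1:
  the invertible self-adjoint elements of S are dense in the self-adjoint
  elements of S (invertibility taken inside S).\<close>
definition real_rank_zero :: "'a::cstar_algebra set \<Rightarrow> bool" where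
  "real_rank_zero S \<longleftrightarrow>
     (\<forall>x\<in>S. adj x = x \<longrightarrow>
        (\<forall>\<epsilon>>0. \<exists>y\<in>S. adj y = y \<and> (\<exists>z\<in>S. y * z = 1 \<and> z * y = 1) \<and>
                        norm (x - y) < \<epsilon>))"

end

theory Submission
  imports Defs "HOL-Computational_Algebra.Polynomial" "HOL-Computational_Algebra.Fundamental_Theorem_Algebra"
begin



lemma adj_zero[simp]: "adj 0 = (0::'a::cstar_algebra)"
  using adj_add[of 0 0] by simp

lemma adj_minus[simp]: "adj (- x) = - adj (x::'a::cstar_algebra)"
  using adj_add[of x "-x"] by (intro minus_unique[symmetric]) simp

lemma adj_diff: "adj (x - y) = adj x - adj (y::'a::cstar_algebra)"
  using adj_add[of x "-y"] by simp

lemma adj_one[simp]: "adj 1 = (1::'a::cstar_algebra)"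
proof -
  have "adj (adj 1 * 1) = adj 1 * adj (adj 1)" by (rule adj_mult)
  then show ?thesis by (simp add: adj_adj)
qed

lemma adj_sum: "adj (sum f S) = sum (\<lambda>i. adj (f i :: 'a::cstar_algebra)) S"
  by (induction S rule: infinite_finite_induct) (auto simp: adj_add)

lemma scaleC_zero_left[simp]: "scaleC 0 x = (0::'a::cstar_algebra)"
  using scaleC_add_left[of 0 0 x] by simp

lemma scaleC_zero_right[simp]: "scaleC c 0 = (0::'a::cstar_algebra)"
  using scaleC_add_right[of c 0 0] by simp

lemma scaleC_minus_right: "scaleC c (- x) = - scaleC c (x::'a::cstar_algebra)"
  using scaleC_add_right[of c x "-x"] by (intro minus_unique[symmetric]) simp

lemma scaleC_minus_left: "scaleC (- c) x = - scaleC c (x::'a::cstar_algebra)"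
  using scaleC_add_left[of c "-c" x] by (intro minus_unique[symmetric]) simp

lemma scaleC_diff_right: "scaleC c (x - y) = scaleC c x - scaleC c (y::'a::cstar_algebra)"
  using scaleC_add_right[of c x "-y"] by (simp add: scaleC_minus_right)

lemma scaleC_diff_left: "scaleC (c - d) x = scaleC c x - scaleC d (x::'a::cstar_algebra)"
  using scaleC_add_left[of c "-d" x] by (simp add: scaleC_minus_left)

lemma scaleC_sum_right: "scaleC c (sum f S) = sum (\<lambda>i. scaleC c (f i :: 'a::cstar_algebra)) S"
  by (induction S rule: infinite_finite_induct) (auto simp: scaleC_add_right)

lemma scaleC_sum_left: "scaleC (sum f S) x = sum (\<lambda>i. scaleC (f i) (x::'a::cstar_algebra)) S"
  by (induction S rule: infinite_finite_induct) (auto simp: scaleC_add_left)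

lemma adj_scaleR: "adj (scaleR r x) = scaleR r (adj (x::'a::cstar_algebra))"
  by (simp add: scaleR_scaleC adj_scaleC)

lemma norm_adj[simp]: "norm (adj x) = norm (x::'a::cstar_algebra)"
proof -
  have a: "norm y \<le> norm (adj y)" for y :: 'a
  proof (cases "y = 0")
    case True then show ?thesis by simp
  next
    case False
    have "(norm y)^2 = norm (adj y * y)" by (simp add: cstar_identity)
    also have "\<dots> \<le> norm (adj y) * norm y" by (rule norm_mult_ineq)
    finally have "norm y * norm y \<le> norm (adj y) * norm y" by (simp add: power2_eq_square)
    then show ?thesis using False by (meson mult_right_le_imp_le norm_ge_zero zero_less_norm_iff)
  qed
  show ?thesis using a[of x] a[of "adj x"] by (simp add: adj_adj)
qed

lemma adj_eq_0_iff[simp]: "adj x = 0 \<longleftrightarrow> x = (0::'a::cstar_algebra)"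
  by (metis adj_adj adj_zero)

lemma adj_mult_self_eq_0: "adj x * x = 0 \<longleftrightarrow> x = (0::'a::cstar_algebra)"
proof
  assume "adj x * x = 0"
  then have "(norm x)^2 = 0" using cstar_identity[of x] by simp
  then show "x = 0" by simp
qed simp

lemma scaleC_eq_0_iff: "scaleC c x = 0 \<longleftrightarrow> c = 0 \<or> x = (0::'a::cstar_algebra)"
proof -
  have "scaleC c x = 0 \<longleftrightarrow> norm (scaleC c x) = 0" by (rule norm_eq_zero[symmetric])
  also have "\<dots> \<longleftrightarrow> c = 0 \<or> x = 0" by (simp add: norm_scaleC)
  finally show ?thesis .
qed

lemma scaleC_of_real: "scaleC (complex_of_real r) x = scaleR r (x::'a::cstar_algebra)"
  by (simp add: scaleR_scaleC)


definition proj :: "'a::cstar_algebra \<Rightarrow> bool" where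
  "proj p \<longleftrightarrow> adj p = p \<and> p * p = p"

lemma proj_norm_le: assumes "proj p" shows "norm p \<le> 1"
proof -
  have "(norm p)^2 = norm p" using cstar_identity[of p] assms by (simp add: proj_def)
  then have "norm p * norm p = norm p * 1" by (simp add: power2_eq_square)
  then have "norm p = 0 \<or> norm p = 1" by auto
  then show ?thesis by auto
qed

lemma proj_compl: "proj p \<Longrightarrow> proj (1 - p)"
  by (simp add: proj_def adj_diff algebra_simps)

lemma neumann:
  fixes u :: "'a::{real_normed_algebra_1, banach}"
  assumes "norm u < 1"
  shows "\<exists>g. (1 - u) * g = 1 \<and> g * (1 - u) = 1 \<and> norm g \<le> 1 / (1 - norm u)"
proof -
  have nb: "norm (u ^ n) \<le> norm u ^ n" for n by (rule norm_power_ineq)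
  have sn: "summable (\<lambda>n. norm u ^ n)" using assms by (intro summable_geometric) simp
  have sumN: "summable (\<lambda>n. norm (u ^ n))"
    by (rule summable_comparison_test'[OF sn]) (use nb in auto)
  have su: "summable (\<lambda>n. u ^ n)" using sumN by (rule summable_norm_cancel)
  define g where "g = suminf (\<lambda>n. u ^ n)"
  have tel: "(\<lambda>n. u ^ n - u ^ Suc n) sums (u ^ 0 - 0)"
    by (rule telescope_sums') (rule LIMSEQ_power_zero[OF assms])
  have "(1 - u) * g = suminf (\<lambda>n. (1 - u) * u ^ n)"
    unfolding g_def by (rule suminf_mult[OF su, symmetric])
  also have "\<dots> = suminf (\<lambda>n. u ^ n - u ^ Suc n)" by (simp add: algebra_simps)
  also have "\<dots> = 1" using tel by (simp add: sums_iff)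
  finally have 1: "(1 - u) * g = 1" .
  have "g * (1 - u) = suminf (\<lambda>n. u ^ n * (1 - u))"
    unfolding g_def by (rule suminf_mult2[OF su])
  also have "\<dots> = suminf (\<lambda>n. u ^ n - u ^ Suc n)" by (simp add: algebra_simps power_commutes)
  also have "\<dots> = 1" using tel by (simp add: sums_iff)
  finally have 2: "g * (1 - u) = 1" .
  have "norm g \<le> (\<Sum>n. norm (u ^ n))" unfolding g_def by (rule summable_norm[OF sumN])
  also have "\<dots> \<le> (\<Sum>n. norm u ^ n)" by (rule suminf_le[OF nb sumN sn])
  also have "\<dots> = 1 / (1 - norm u)" using assms by (simp add: suminf_geometric)
  finally show ?thesis using 1 2 by blast
qed



lemma massoc: "a * b = c \<Longrightarrow> a * (b * x) = c * (x::'a::ring)"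
  by (metis mult.assoc)

lemma norm_sandwich:
  fixes p q x :: "'a::cstar_algebra"
  assumes "proj p" "proj q"
  shows "norm (p * x * q) \<le> norm x"
proof -
  have "norm (p * x * q) \<le> norm (p * x) * norm q" by (rule norm_mult_ineq)
  also have "\<dots> \<le> norm p * norm x * norm q"
    by (intro mult_right_mono norm_mult_ineq norm_ge_zero)
  also have "\<dots> \<le> 1 * norm x * 1"
    using proj_norm_le[OF assms(1)] proj_norm_le[OF assms(2)]
    by (intro mult_mono) auto
  finally show ?thesis by simp
qed

lemma corner_rr0:
  fixes r b :: "'a::cstar_algebra"
  assumes rr0: "real_rank_zero (UNIV::'a set)" and pr: "proj r"
    and bsa: "adj b = b" and rb: "r * b = b" and br: "b * r = b" and dpos: "\<delta> > 0"
  shows "\<exists>s s'. adj s = s \<and> r * s = s \<and> s * r = s \<and> r * s' = s' \<and> s' * r = s'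
            \<and> s * s' = r \<and> s' * s = r \<and> norm (b - s) < \<delta>"
proof -
  define r' where "r' = 1 - r"
  have rr: "r * r = r" and ar: "adj r = r" using pr by (auto simp: proj_def)
  have pr': "proj r'" unfolding r'_def by (rule proj_compl[OF pr])
  have rr'm: "r * r' = 0" "r' * r = 0" "r' * r' = r'"
    using rr ar by (auto simp: r'_def algebra_simps adj_diff)
  have rr'o: "adj r' = r'" "r + r' = 1"
    using rr ar by (auto simp: r'_def algebra_simps adj_diff)
  note rr' = rr'm rr'o
  define \<eta> where "\<eta> = min (1/2) (\<delta>/4)"
  have eta: "\<eta> > 0" "\<eta> \<le> 1/2" "\<eta> \<le> \<delta>/4" using dpos by (auto simp: \<eta>_def)
  define z where "z = b + r'"
  have zsa: "adj z = z" using bsa rr' by (simp add: z_def adj_add)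
  from rr0 zsa eta(1) obtain y where ysa: "adj y = y" and yinv: "\<exists>g. y * g = 1 \<and> g * y = 1"
      and yz: "norm (z - y) < \<eta>"
    unfolding real_rank_zero_def by (metis UNIV_I norm_minus_commute)
  from yinv obtain g where yg: "y * g = 1" and gy: "g * y = 1" by blast
  have br': "b * r' = 0" "r' * b = 0"
    using rb br rr by (auto simp: r'_def algebra_simps)
  define a where "a = r * y * r"
  define c where "c = r * y * r'"
  define d where "d = r' * y * r'"
  have ac: "adj c = r' * y * r" using ysa rr' ar by (simp add: c_def adj_mult mult.assoc)
  have dsa: "adj d = d" using ysa rr' by (simp add: d_def adj_mult mult.assoc)
  have asa: "adj a = a" using ysa ar by (simp add: a_def adj_mult mult.assoc)
  have "r' * (z - y) * r' = r' - d"
    using rr' br' by (simp add: z_def d_def algebra_simps rr'm[THEN massoc] br'[THEN massoc])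
  then have nd: "norm (r' - d) < \<eta>"
    using norm_sandwich[OF pr' pr', of "z - y"] yz by simp
  have "r * (z - y) * r = b - a"
    using rr' rb br rr by (simp add: z_def a_def algebra_simps rr'm[THEN massoc] rb[THEN massoc] br[THEN massoc] rr[THEN massoc])
  then have na: "norm (b - a) < \<eta>"
    using norm_sandwich[OF pr pr, of "z - y"] yz by simp
  have "r * (z - y) * r' = - c"
    using rr' rb br rr br' by (simp add: z_def c_def algebra_simps rr'm[THEN massoc] rb[THEN massoc] br[THEN massoc] rr[THEN massoc] br'[THEN massoc])
  then have nc: "norm c < \<eta>"
    using norm_sandwich[OF pr pr', of "z - y"] yz by simp
  have "norm (r' - d) < 1" using nd eta by simp
  from neumann[OF this] obtain G where G1: "(1 - (r' - d)) * G = 1" and G2: "G * (1 - (r' - d)) = 1"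
      and nG: "norm G \<le> 1 / (1 - norm (r' - d))" by blast
  have wdef: "1 - (r' - d) = r + d" using rr' by (simp add: algebra_simps)
  have rd: "r * d = 0" "d * r = 0" using rr' by (simp_all add: d_def mult.assoc rr'm[THEN massoc])
  have rd': "r' * d = d" "d * r' = d" using rr' by (simp_all add: d_def mult.assoc rr'm[THEN massoc])
  have wG: "(r + d) * G = 1" and Gw: "G * (r + d) = 1" using G1 G2 wdef by simp_all
  have rw: "r * (r + d) = r" "(r + d) * r = r" using rr rd by (simp_all add: algebra_simps)
  have rG: "r * G = G * r"
  proof -
    have "r * G = (G * (r + d)) * r * G" using Gw by simp
    also have "\<dots> = G * ((r + d) * r) * G" by (simp add: mult.assoc)
    also have "\<dots> = G * (r * (r + d)) * G" using rw by simp
    also have "\<dots> = G * r * ((r + d) * G)" by (simp add: mult.assoc)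
    also have "\<dots> = G * r" using wG by simp
    finally show ?thesis .
  qed
  have adjG: "adj G = G"
  proof -
    have aw: "adj (r + d) = r + d" using ar dsa by (simp add: adj_add)
    have "adj G * (r + d) = 1" using arg_cong[OF wG, of adj] aw by (simp add: adj_mult)
    then have "adj G = adj G * ((r + d) * G)" using wG by simp
    also have "\<dots> = G" using \<open>adj G * (r + d) = 1\<close> by (simp add: mult.assoc[symmetric])
    finally show ?thesis .
  qed
  have "norm (r' - d) \<le> 1/2" using nd eta by simp
  then have "1 / (1 - norm (r' - d)) \<le> 2" by (simp add: field_simps)
  then have nG2: "norm G \<le> 2" using nG by linarith
  define d' where "d' = r' * G * r'"
  have dd': "d * d' = r'"
  proof -
    have "d * d' = d * G * r'" using rd' by (simp add: d'_def mult.assoc[symmetric])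
    also have "\<dots> = ((r + d) - r) * G * r'" by simp
    also have "\<dots> = (r + d) * G * r' - r * G * r'" by (simp add: algebra_simps)
    also have "\<dots> = r' - r * G * r'" using wG by simp
    also have "\<dots> = r'" using rG rr' by (simp add: mult.assoc)
    finally show ?thesis .
  qed
  have d'd: "d' * d = r'"
  proof -
    have "d' * d = r' * G * d" using rd' by (simp add: d'_def mult.assoc)
    also have "\<dots> = r' * G * ((r + d) - r)" by simp
    also have "\<dots> = r' * (G * (r + d)) - r' * G * r" by (simp add: algebra_simps)
    also have "\<dots> = r' - r' * G * r" using Gw by simp
    also have "\<dots> = r' - (r' * r) * G" using rG by (simp add: mult.assoc)
    also have "\<dots> = r'" using rr'm by simp
    finally show ?thesis .
  qed
  have d'sa: "adj d' = d'" using adjG rr' by (simp add: d'_def adj_mult mult.assoc)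
  have rd'': "r' * d' = d'" "d' * r' = d'" "r * d' = 0" "d' * r = 0"
    using rr' by (simp_all add: d'_def mult.assoc rr'm[THEN massoc])
  have nd': "norm d' \<le> 2" using norm_sandwich[OF pr' pr', of G] nG2 by (simp add: d'_def)
  (* Schur complement *)
  define s where "s = a - c * d' * adj c"
  define s' where "s' = r * g * r"
  have ssa: "adj s = s" using asa d'sa by (simp add: s_def adj_diff adj_mult mult.assoc adj_adj)
  have rc: "r * c = c" "c * r' = c" "c * r = 0" "r' * c = 0"
    using rr rr' by (simp_all add: c_def mult.assoc rr[THEN massoc] rr'm[THEN massoc])
  have rac: "r * adj c = 0" "adj c * r = adj c" "r' * adj c = adj c" "adj c * r' = 0"
    using rr rr' by (simp_all add: ac mult.assoc rr[THEN massoc] rr'm[THEN massoc])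
  have ra: "r * a = a" "a * r = a" "r' * a = 0" "a * r' = 0"
    using rr rr' by (simp_all add: a_def mult.assoc rr[THEN massoc] rr'm[THEN massoc])
  have rs: "r * s = s" "s * r = s"
    using ra rc rac by (simp_all add: s_def algebra_simps ra[THEN massoc] rc[THEN massoc] rac[THEN massoc])
  have rs': "r * s' = s'" "s' * r = s'"
    using rr by (simp_all add: s'_def mult.assoc rr[THEN massoc])
  have ydec: "y = a + c + adj c + d"
  proof -
    have "y = (r + r') * y * (r + r')" using rr' by simp
    then show ?thesis using ysa ar rr'o(1) by (simp add: a_def c_def d_def algebra_simps adj_mult)
  qed
  have e1: "r * y * g * r = r" using yg rr by (simp add: mult.assoc)
  have e2: "r' * y * g * r = 0" using yg rr' by (simp add: mult.assoc)
  have ry: "r * y = a + c" using rr' ydec ra rc rac rd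
    by (simp add: algebra_simps)
  have r'y: "r' * y = adj c + d" using rr' ydec ra rc rac rd'
    by (simp add: algebra_simps)
  have f1: "a * s' + c * (r' * g * r) = r"
  proof -
    have "r = (a + c) * g * r" using e1 ry by simp
    also have "\<dots> = (a * r + c * r') * g * r" using ra rc by simp
    also have "\<dots> = a * (r * g * r) + c * (r' * g * r)" by (simp add: algebra_simps)
    finally show ?thesis by (simp add: s'_def)
  qed
  have f2: "adj c * s' + d * (r' * g * r) = 0"
  proof -
    have "0 = (adj c + d) * g * r" using e2 r'y by simp
    also have "\<dots> = (adj c * r + d * r') * g * r" using rac rd' by simp
    also have "\<dots> = adj c * (r * g * r) + d * (r' * g * r)" by (simp add: algebra_simps)
    finally show ?thesis by (simp add: s'_def)
  qed
  have f3: "r' * g * r = - (d' * adj c * s')"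
  proof -
    have "d' * (adj c * s' + d * (r' * g * r)) = 0" using f2 by simp
    then have "d' * adj c * s' + (d' * d) * (r' * g * r) = 0" by (simp add: algebra_simps)
    then have "d' * adj c * s' + r' * g * r = 0" using d'd rr' by (simp add: mult.assoc d'd[THEN massoc] rr'm[THEN massoc])
    then have "- (d' * adj c * s') = r' * g * r" by (rule minus_unique)
    then show ?thesis by simp
  qed
  have ss': "s * s' = r"
  proof -
    have "s * s' = a * s' - c * d' * adj c * s'" by (simp add: s_def algebra_simps)
    also have "\<dots> = a * s' + c * (r' * g * r)" using f3 by (simp add: algebra_simps)
    also have "\<dots> = r" by (rule f1)
    finally show ?thesis .
  qed
  have e3: "r * g * y * r = r" using gy rr by (simp add: mult.assoc)
  have e4: "r * g * y * r' = 0" using gy rr' by (simp add: mult.assoc)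
  have yr: "y * r = a + adj c" using rr' ydec ra rc rac rd
    by (simp add: algebra_simps)
  have yr': "y * r' = c + d" using rr' ydec ra rc rac rd'
    by (simp add: algebra_simps)
  have h1: "s' * a + (r * g * r') * adj c = r"
  proof -
    have "r = r * g * (a + adj c)" using e3 yr by (simp add: mult.assoc)
    also have "\<dots> = (r * g * r) * a + (r * g * r') * adj c"
      using ra rac by (simp add: algebra_simps mult.assoc)
    finally show ?thesis by (simp add: s'_def)
  qed
  have h2: "s' * c + (r * g * r') * d = 0"
  proof -
    have "0 = r * g * (c + d)" using e4 yr' by (simp add: mult.assoc)
    also have "\<dots> = (r * g * r) * c + (r * g * r') * d"
      using rc rd' by (simp add: algebra_simps mult.assoc)
    finally show ?thesis by (simp add: s'_def)
  qed
  have h3: "r * g * r' = - (s' * c * d')"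
  proof -
    have "(s' * c + (r * g * r') * d) * d' = 0" using h2 by simp
    then have "s' * c * d' + (r * g * r') * (d * d') = 0" by (simp add: algebra_simps)
    then have "s' * c * d' + r * g * r' = 0" using dd' rr' by (simp add: mult.assoc)
    then have "- (s' * c * d') = r * g * r'" by (rule minus_unique)
    then show ?thesis by simp
  qed
  have s's: "s' * s = r"
  proof -
    have "s' * s = s' * a - s' * c * d' * adj c" by (simp add: s_def algebra_simps)
    also have "\<dots> = s' * a + (r * g * r') * adj c" using h3 by (simp add: algebra_simps)
    also have "\<dots> = r" by (rule h1)
    finally show ?thesis .
  qed
  have "norm (c * d' * adj c) \<le> norm (c * d') * norm (adj c)" by (rule norm_mult_ineq)
  also have "\<dots> \<le> norm c * norm d' * norm (adj c)"
    by (intro mult_right_mono norm_mult_ineq norm_ge_zero)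
  also have "\<dots> \<le> \<eta> * 2 * \<eta>"
    using nc nd' eta by (intro mult_mono) auto
  finally have ncd: "norm (c * d' * adj c) \<le> \<eta> * 2 * \<eta>" .
  have "norm (b - s) = norm ((b - a) + c * d' * adj c)" by (simp add: s_def algebra_simps)
  also have "\<dots> \<le> norm (b - a) + norm (c * d' * adj c)" by (rule norm_triangle_ineq)
  also have "\<dots> < \<eta> + \<eta> * 2 * \<eta>" using na ncd by simp
  also have "\<dots> \<le> \<delta>"
  proof -
    have "\<eta> * 2 * \<eta> \<le> \<eta>" using eta by (simp add: mult_le_cancel_left1)
    then show ?thesis using eta by linarith
  qed
  finally have nbs: "norm (b - s) < \<delta>" .
  show ?thesis using ssa rs rs' ss' s's nbs by blast
qed



definition ev :: "complex poly \<Rightarrow> 'a::cstar_algebra \<Rightarrow> 'a" where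
  "ev p h = fold_coeffs (\<lambda>a acc. scaleC a 1 + h * acc) p 0"

lemma ev_0[simp]: "ev 0 h = 0"
  by (simp add: ev_def)

lemma ev_pCons[simp]: "ev (pCons a p) h = scaleC a 1 + h * ev p h"
proof (cases "a = 0 \<and> p = 0")
  case True then show ?thesis by (simp add: ev_def)
next
  case False
  then show ?thesis
  proof (cases "p = 0")
    case True
    then have "a \<noteq> 0" using False by simp
    then show ?thesis using True by (simp add: ev_def)
  next
    case False
    then show ?thesis by (simp add: ev_def)
  qed
qed

lemma ev_add[simp]: "ev (p + q) h = ev p h + ev q h"
proof (induction p arbitrary: q rule: pCons_induct)
  case 0 then show ?case by simp
next
  case (pCons a p)
  obtain b q' where q: "q = pCons b q'" by (cases q) auto
  show ?case using pCons.IH[of q'] by (simp add: q scaleC_add_left algebra_simps)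
qed

lemma ev_smult[simp]: "ev (smult c p) h = scaleC c (ev p h)"
  by (induction p rule: pCons_induct)
     (simp_all add: scaleC_add_right scaleC_scaleC scaleC_mult_right)

lemma ev_minus[simp]: "ev (- p) h = - ev p h"
  using ev_add[of p "-p" h] by (intro minus_unique[symmetric]) simp

lemma ev_diff[simp]: "ev (p - q) h = ev p h - ev q h"
  using ev_add[of p "-q" h] by simp

lemma ev_mult[simp]: "ev (p * q) h = ev p h * ev q h"
proof (induction p rule: pCons_induct)
  case 0 then show ?case by simp
next
  case (pCons a p)
  have "ev (pCons a p * q) h = scaleC a (ev q h) + h * (ev p h * ev q h)"
    using pCons.IH by simp
  also have "\<dots> = (scaleC a 1 + h * ev p h) * ev q h"
    by (simp add: algebra_simps scaleC_mult_left mult.assoc)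
  finally show ?case by simp
qed

lemma ev_const[simp]: "ev [:c:] h = scaleC c 1"
  by simp

lemma ev_one[simp]: "ev 1 h = 1"
  by (simp add: one_pCons scaleC_one)

lemma ev_lin: "ev [:- z, 1:] h = h - scaleC z 1"
  by (simp add: scaleC_one scaleC_minus_left)

lemma ev_monom: "ev (monom c k) h = scaleC c (h ^ k)"
proof (induction k)
  case 0 then show ?case by (simp add: monom_0)
next
  case (Suc k) then show ?case by (simp add: monom_Suc scaleC_mult_right)
qed

lemma ev_sum: "ev (sum f S) h = sum (\<lambda>i. ev (f i) h) S"
  by (induction S rule: infinite_finite_induct) auto

lemma ev_commute: "x * h = h * x \<Longrightarrow> x * ev p h = ev p h * x"
proof (induction p rule: pCons_induct)
  case 0 then show ?case by simp
next
  case (pCons a p)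
  have "x * ev (pCons a p) h = scaleC a x + (x * h) * ev p h"
    by (simp add: algebra_simps scaleC_mult_right mult.assoc)
  also have "\<dots> = scaleC a x + h * (x * ev p h)" using pCons by (simp add: mult.assoc)
  also have "\<dots> = ev (pCons a p) h * x" using pCons by (simp add: algebra_simps scaleC_mult_left mult.assoc)
  finally show ?case .
qed

lemma ev_comm: "ev p h * ev q h = ev q h * ev p h"
  by (metis ev_mult mult.commute)

lemma ev_eigen:
  assumes "h * x = scaleC l x"
  shows "ev p h * x = scaleC (poly p l) x"
proof (induction p rule: pCons_induct)
  case 0 then show ?case by simp
next
  case (pCons a p)
  have "ev (pCons a p) h * x = scaleC a x + h * (ev p h * x)"
    by (simp add: algebra_simps scaleC_mult_left mult.assoc)
  also have "\<dots> = scaleC a x + scaleC (poly p l) (h * x)"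
    using pCons by (simp add: scaleC_mult_right)
  also have "\<dots> = scaleC (poly (pCons a p) l) x"
    using assms by (simp add: scaleC_scaleC scaleC_add_left algebra_simps)
  finally show ?case .
qed

lemma ev_adj:
  assumes "adj h = h"
  shows "adj (ev p h) = ev (map_poly cnj p) h"
proof (induction p rule: pCons_induct)
  case 0 then show ?case by simp
next
  case (pCons a p)
  have c: "ev (map_poly cnj p) h * h = h * ev (map_poly cnj p) h"
    by (rule ev_commute[symmetric]) simp
  show ?case using pCons c assms
    by (simp add: map_poly_pCons adj_add adj_mult adj_scaleC)
qed

definition rpoly :: "complex poly \<Rightarrow> bool" where
  "rpoly p \<longleftrightarrow> (\<forall>i. coeff p i \<in> \<real>)"

lemma rpoly_mult: "rpoly p \<Longrightarrow> rpoly q \<Longrightarrow> rpoly (p * q)"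
  unfolding rpoly_def by (auto simp: coeff_mult)

lemma rpoly_prod: "(\<And>i. i \<in> S \<Longrightarrow> rpoly (f i)) \<Longrightarrow> rpoly (prod f S)"
proof (induction S rule: infinite_finite_induct)
  case (infinite A) then show ?case by (simp add: rpoly_def coeff_1)
next
  case empty then show ?case by (simp add: rpoly_def coeff_1)
next
  case (insert x F) then show ?case by (simp add: rpoly_mult)
qed

lemma rpoly_smult: "c \<in> \<real> \<Longrightarrow> rpoly p \<Longrightarrow> rpoly (smult c p)"
  unfolding rpoly_def by auto

lemma rpoly_lin: "z \<in> \<real> \<Longrightarrow> rpoly [:- z, 1:]"
  unfolding rpoly_def by (auto simp: coeff_pCons split: nat.splits)

lemma rpoly_cnj: "rpoly p \<Longrightarrow> map_poly cnj p = p"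
  unfolding rpoly_def by (intro poly_eqI) (simp add: coeff_map_poly Reals_cnj_iff)

lemma ev_sa: "adj h = h \<Longrightarrow> rpoly p \<Longrightarrow> adj (ev p h) = ev p h"
  by (simp add: ev_adj rpoly_cnj)

lemma adj_scaleC_one_real: "z \<in> \<real> \<Longrightarrow> adj (scaleC z (1::'a::cstar_algebra)) = scaleC z 1"
  by (simp add: adj_scaleC Reals_cnj_iff)

lemma K1:
  fixes h D :: "'a::cstar_algebra"
  assumes sa: "adj h = h" and e: "(h - scaleC z 1) * D = 0" and D: "D \<noteq> 0"
  shows "z \<in> \<real>"
proof -
  have hD: "h * D = scaleC z D" using e by (simp add: algebra_simps scaleC_mult_left)
  have "adj (h * D) = adj D * h" using sa by (simp add: adj_mult)
  then have aDh: "adj D * h = scaleC (cnj z) (adj D)" using hD by (simp add: adj_scaleC)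
  have "adj D * (h * D) = scaleC z (adj D * D)" using hD by (simp add: scaleC_mult_right)
  moreover have "adj D * (h * D) = scaleC (cnj z) (adj D * D)"
    using aDh by (simp add: mult.assoc[symmetric] scaleC_mult_left)
  ultimately have "scaleC (z - cnj z) (adj D * D) = 0" by (simp add: scaleC_diff_left)
  then have "z - cnj z = 0" using D by (simp add: scaleC_eq_0_iff adj_mult_self_eq_0)
  then show ?thesis by (simp add: Reals_cnj_iff)
qed

lemma K2:
  fixes h E :: "'a::cstar_algebra"
  assumes sa: "adj h = h" and z: "z \<in> \<real>" and e: "(h - scaleC z 1) * ((h - scaleC z 1) * E) = 0"
  shows "(h - scaleC z 1) * E = 0"
proof -
  define k where "k = h - scaleC z 1"
  have ka: "adj k = k" using sa z by (simp add: k_def adj_diff adj_scaleC_one_real)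
  have "adj (k * E) * (k * E) = adj E * (k * (k * E))" using ka by (simp add: adj_mult mult.assoc)
  also have "\<dots> = 0" using e by (simp add: k_def)
  finally show ?thesis by (simp add: adj_mult_self_eq_0 k_def)
qed

lemma roots_real:
  fixes h :: "'a::cstar_algebra"
  assumes sa: "adj h = h"
  shows "p \<noteq> 0 \<Longrightarrow> ev (p * g) h = 0 \<Longrightarrow>
    \<exists>L. finite L \<and> L \<subseteq> \<real> \<and> ev ((\<Prod>l\<in>L. [:- l, 1:]) * g) h = 0"
proof (induction "degree p" arbitrary: p g rule: less_induct)
  case less
  show ?case
  proof (cases "degree p = 0")
    case True
    then obtain c where p: "p = [:c:]" by (metis degree_eq_zeroE)
    then have "c \<noteq> 0" using less.prems by simp
    then have "ev g h = 0" using less.prems p by (simp add: scaleC_eq_0_iff)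
    then show ?thesis by (intro exI[of _ "{}"]) simp
  next
    case False
    then obtain z where "poly p z = 0" using alg_closed_imp_poly_has_root by blast
    then have "[:- z, 1:] dvd p" by (simp add: dvd_iff_poly_eq_0)
    then obtain p' where p: "p = [:- z, 1:] * p'" by (elim dvdE)
    have p'0: "p' \<noteq> 0" using less.prems p by auto
    have "degree p = 1 + degree p'" unfolding p using p'0 by (subst degree_mult_eq) auto
    then have dp: "degree p' < degree p" by simp
    have "p' * ([:- z, 1:] * g) = p * g" by (simp only: p mult_ac)
    then have "ev (p' * ([:- z, 1:] * g)) h = 0" using less.prems(2) by (simp only:)
    from less.hyps[OF dp p'0 this] obtain L where L: "finite L" "L \<subseteq> \<real>"
      and eL: "ev ((\<Prod>l\<in>L. [:- l, 1:]) * ([:- z, 1:] * g)) h = 0" by blast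
    define D where "D = ev ((\<Prod>l\<in>L. [:- l, 1:]) * g) h"
    have "(\<Prod>l\<in>L. [:- l, 1:]) * ([:- z, 1:] * g) = [:- z, 1:] * ((\<Prod>l\<in>L. [:- l, 1:]) * g)"
      by (simp only: mult_ac)
    then have "ev ([:- z, 1:] * ((\<Prod>l\<in>L. [:- l, 1:]) * g)) h = 0" using eL by (simp only:)
    then have eD: "(h - scaleC z 1) * D = 0"
      by (simp only: ev_mult[of "[:- z, 1:]"] ev_lin D_def)
    show ?thesis
    proof (cases "D = 0")
      case True then show ?thesis using L by (auto simp: D_def)
    next
      case False
      then have zr: "z \<in> \<real>" using K1[OF sa eD] by simp
      show ?thesis
      proof (cases "z \<in> L")
        case True
        define E where "E = ev ((\<Prod>l\<in>L - {z}. [:- l, 1:]) * g) h"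
        have "(\<Prod>l\<in>L. [:- l, 1:]) = [:- z, 1:] * (\<Prod>l\<in>L - {z}. [:- l, 1:])"
          using True L by (simp add: prod.remove)
        then have "(\<Prod>l\<in>L. [:- l, 1:]) * g = [:- z, 1:] * ((\<Prod>l\<in>L - {z}. [:- l, 1:]) * g)"
          by (simp only: mult_ac)
        then have DE: "D = (h - scaleC z 1) * E"
          by (simp only: D_def E_def ev_mult[of "[:- z, 1:]"] ev_lin)
        have "(h - scaleC z 1) * ((h - scaleC z 1) * E) = 0" using eD DE by simp
        then have "D = 0" using K2[OF sa zr] DE by simp
        then show ?thesis using L by (auto simp: D_def)
      next
        case False
        have "(\<Prod>l\<in>insert z L. [:- l, 1:]) = [:- z, 1:] * (\<Prod>l\<in>L. [:- l, 1:])"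
          using False L by simp
        then have "(\<Prod>l\<in>insert z L. [:- l, 1:]) * g = (\<Prod>l\<in>L. [:- l, 1:]) * ([:- z, 1:] * g)"
          by (simp only: mult_ac)
        then have "ev ((\<Prod>l\<in>insert z L. [:- l, 1:]) * g) h = 0"
          using eL by (simp only:)
        then show ?thesis using L zr by (intro exI[of _ "insert z L"]) auto
      qed
    qed
  qed
qed



lemma degree_prod_lin: "finite S \<Longrightarrow> degree (\<Prod>l\<in>S. [:- l, 1::complex:]) \<le> card S"
proof -
  assume fS: "finite S"
  have "degree (\<Prod>l\<in>S. [:- l, 1::complex:]) \<le> sum (degree \<circ> (\<lambda>l. [:- l, 1::complex:])) S"
    by (rule degree_prod_sum_le[OF fS])
  also have "\<dots> = card S" by simp
  finally show ?thesis .
qed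

lemma spectral:
  fixes h :: "'a::cstar_algebra"
  assumes sa: "adj h = h" and p0: "p \<noteq> 0" and ep: "ev p h = 0"
  shows "\<exists>L P. finite L \<and> (\<forall>l\<in>L. (\<exists>q. P l = ev q h) \<and> proj (P l) \<and> h * P l = scaleC l (P l))
           \<and> sum P L = 1"
proof -
  from roots_real[OF sa p0, of 1] ep obtain L where L: "finite L" "L \<subseteq> \<real>"
    and eL: "ev (\<Prod>l\<in>L. [:- l, 1:]) h = 0" by auto
  have Lne: "L \<noteq> {}" using eL by auto
  define c where "c l = 1 / (\<Prod>m\<in>L - {l}. (l - m))" for l
  define Lp where "Lp l = smult (c l) (\<Prod>m\<in>L - {l}. [:- m, 1:])" for l
  define P where "P l = ev (Lp l) h" for l
  have hP: "h * P l = scaleC l (P l)" if l: "l \<in> L" for l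
  proof -
    have "[:- l, 1:] * Lp l = smult (c l) (\<Prod>m\<in>L. [:- m, 1:])"
      using l L by (simp add: Lp_def prod.remove mult_smult_right)
    then have "ev ([:- l, 1:] * Lp l) h = 0" using eL by simp
    then have "(h - scaleC l 1) * P l = 0" by (simp only: ev_mult[of "[:- l, 1:]"] ev_lin P_def)
    then show ?thesis by (simp add: algebra_simps scaleC_mult_left)
  qed
  have pLl: "poly (Lp l) l = 1" if l: "l \<in> L" for l
  proof -
    have nz: "(\<Prod>m\<in>L - {l}. (l - m)) \<noteq> 0" using L by (simp add: prod_zero_iff)
    show ?thesis using nz by (simp add: Lp_def c_def poly_prod)
  qed
  have pLm: "poly (Lp l) m = 0" if "l \<in> L" "m \<in> L" "m \<noteq> l" for l m
  proof -
    have "(\<Prod>k\<in>L - {l}. poly [:- k, 1:] m) = 0"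
      using that L by (intro prod_zero) auto
    then show ?thesis by (simp add: Lp_def poly_prod)
  qed
  have sumL: "(\<Sum>l\<in>L. Lp l) = 1"
  proof (rule poly_eqI_degree[of L])
    fix x assume x: "x \<in> L"
    have "poly (\<Sum>l\<in>L. Lp l) x = (\<Sum>l\<in>L. poly (Lp l) x)" by (simp add: poly_sum)
    also have "\<dots> = poly (Lp x) x" using x L pLm by (subst sum.remove[of _ x]) (auto intro!: sum.neutral)
    also have "\<dots> = 1" using pLl x by simp
    finally show "poly (\<Sum>l\<in>L. Lp l) x = poly 1 x" by simp
  next
    have "degree (\<Sum>l\<in>L. Lp l) \<le> card L - 1"
    proof (rule degree_sum_le[OF L(1)])
      fix l assume l: "l \<in> L"
      have "degree (Lp l) \<le> degree (\<Prod>m\<in>L - {l}. [:- m, 1::complex:])"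
        by (simp add: Lp_def degree_smult_le)
      also have "\<dots> \<le> card (L - {l})" using L by (intro degree_prod_lin) auto
      also have "\<dots> = card L - 1" using l L by simp
      finally show "degree (Lp l) \<le> card L - 1" .
    qed
    moreover have "card L > 0" using Lne L by (simp add: card_gt_0_iff)
    ultimately show "degree (\<Sum>l\<in>L. Lp l) < card L" by linarith
  next
    show "degree (1::complex poly) < card L" using Lne L by (simp add: card_gt_0_iff)
  qed
  have rp: "rpoly (Lp l)" if l: "l \<in> L" for l
  proof -
    have "c l \<in> \<real>" using L l unfolding c_def by (intro Reals_divide Reals_1 prod_in_Reals Reals_diff) auto
    moreover have "rpoly (\<Prod>m\<in>L - {l}. [:- m, 1:])" using L by (intro rpoly_prod rpoly_lin) auto
    ultimately show ?thesis by (simp add: Lp_def rpoly_smult)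
  qed
  have prj: "proj (P l)" if l: "l \<in> L" for l
  proof -
    have "P l * P l = scaleC (poly (Lp l) l) (P l)" unfolding P_def
      by (rule ev_eigen) (use hP[OF l] in \<open>simp add: P_def\<close>)
    then have "P l * P l = P l" using pLl[OF l] by (simp add: scaleC_one)
    moreover have "adj (P l) = P l" using ev_sa[OF sa rp[OF l]] by (simp add: P_def)
    ultimately show ?thesis by (simp add: proj_def)
  qed
  have "sum P L = ev (\<Sum>l\<in>L. Lp l) h" by (simp add: P_def ev_sum)
  also have "\<dots> = 1" using sumL by simp
  finally have sP: "sum P L = 1" .
  have ex: "\<exists>q. P l = ev q h" for l by (auto simp: P_def)
  show ?thesis
    by (rule exI[of _ L], rule exI[of _ P]) (use L(1) hP prj sP ex in blast)
qed



interpretation cv: vector_space "scaleC :: complex \<Rightarrow> 'a::cstar_algebra \<Rightarrow> 'a"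
  by unfold_locales (simp_all add: scaleC_add_right scaleC_add_left scaleC_scaleC scaleC_one)

definition salg :: "'a::cstar_algebra set \<Rightarrow> bool" where
  "salg E \<longleftrightarrow> 0 \<in> E \<and> 1 \<in> E \<and> (\<forall>x\<in>E. \<forall>y\<in>E. x + y \<in> E \<and> x * y \<in> E) \<and>
     (\<forall>c. \<forall>x\<in>E. scaleC c x \<in> E) \<and> (\<forall>x\<in>E. adj x \<in> E)"

lemma salgD:
  assumes "salg E"
  shows "0 \<in> E" "1 \<in> E" "x \<in> E \<Longrightarrow> y \<in> E \<Longrightarrow> x + y \<in> E" "x \<in> E \<Longrightarrow> y \<in> E \<Longrightarrow> x * y \<in> E"
    "x \<in> E \<Longrightarrow> scaleC c x \<in> E" "x \<in> E \<Longrightarrow> adj x \<in> E"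
  using assms by (auto simp: salg_def)

lemma salg_minus: "salg E \<Longrightarrow> x \<in> E \<Longrightarrow> - x \<in> E"
  using salgD(5)[of E x "-1"] by (simp add: scaleC_minus_left scaleC_one)

lemma salg_diff: "salg E \<Longrightarrow> x \<in> E \<Longrightarrow> y \<in> E \<Longrightarrow> x - y \<in> E"
  using salgD(3)[of E x "-y"] salg_minus[of E y] by simp

lemma salg_sum: "salg E \<Longrightarrow> (\<And>i. i \<in> S \<Longrightarrow> f i \<in> E) \<Longrightarrow> sum f S \<in> E"
  by (induction S rule: infinite_finite_induct) (auto intro: salgD)

lemma salg_power: "salg E \<Longrightarrow> h \<in> E \<Longrightarrow> h ^ k \<in> E"
  by (induction k) (auto intro: salgD)

lemma salg_ev: "salg E \<Longrightarrow> h \<in> E \<Longrightarrow> ev p h \<in> E"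
  by (induction p rule: pCons_induct) (auto intro: salgD)

lemma cspan_sub_span: "cspan F \<subseteq> cv.span F"
proof
  fix x assume "x \<in> cspan F"
  then obtain c where x: "x = (\<Sum>y\<in>F. scaleC (c y) y)" by (auto simp: cspan_def)
  show "x \<in> cv.span F" unfolding x by (intro cv.span_sum cv.span_scale cv.span_base)
qed

lemma fd_bound:
  assumes F: "finite F" "E \<subseteq> cspan F" and T: "T \<subseteq> E" "cv.independent T"
  shows "finite T \<and> card T \<le> card F"
  using cv.independent_span_bound[OF F(1) T(2)] T(1) F(2) cspan_sub_span by blast

lemma fd_annihilator:
  fixes h :: "'a::cstar_algebra"
  assumes F: "finite F" "E \<subseteq> cspan F" and E: "salg E" and h: "h \<in> E"
  shows "\<exists>p. p \<noteq> 0 \<and> ev p h = 0"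
proof (cases "inj_on (\<lambda>k. h ^ k) {..card F}")
  case False
  then obtain i j where ij: "i \<le> card F" "j \<le> card F" "i \<noteq> j" "h ^ i = h ^ j"
    unfolding inj_on_def by auto
  define p where "p = monom 1 j - monom (1::complex) i"
  have "coeff p j = 1" using ij by (simp add: p_def coeff_monom)
  then have "p \<noteq> 0" by auto
  moreover have "ev p h = 0" using ij by (simp add: p_def ev_monom scaleC_one)
  ultimately show ?thesis by blast
next
  case True
  define T where "T = (\<lambda>k. h ^ k) ` {..card F}"
  have cT: "card T = Suc (card F)" using True by (simp add: T_def card_image)
  have TE: "T \<subseteq> E" using salg_power[OF E h] by (auto simp: T_def)
  have fT: "finite T" by (simp add: T_def)
  have "cv.dependent T"
  proof (rule ccontr)
    assume "\<not> cv.dependent T"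
    then have "card T \<le> card F" using fd_bound[OF F TE] by blast
    then show False using cT by simp
  qed
  then obtain u where u: "\<exists>v\<in>T. u v \<noteq> 0" and su: "(\<Sum>v\<in>T. scaleC (u v) v) = 0"
    using cv.dependent_finite[OF fT] by blast
  define p where "p = (\<Sum>k\<le>card F. monom (u (h ^ k)) k)"
  have "ev p h = (\<Sum>k\<le>card F. scaleC (u (h ^ k)) (h ^ k))"
    by (simp add: p_def ev_sum ev_monom)
  also have "\<dots> = (\<Sum>v\<in>T. scaleC (u v) v)"
    unfolding T_def by (subst sum.reindex[OF True]) simp
  also have "\<dots> = 0" by (rule su)
  finally have ep: "ev p h = 0" .
  from u obtain k where k: "k \<le> card F" "u (h ^ k) \<noteq> 0" by (auto simp: T_def)
  have "coeff p k = (\<Sum>j\<le>card F. if k = j then u (h ^ j) else 0)"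
    by (simp add: p_def coeff_sum coeff_monom)
  also have "\<dots> = u (h ^ k)" using k by (simp add: sum.delta)
  finally have "p \<noteq> 0" using k by auto
  then show ?thesis using ep by blast
qed

definition ofam :: "'a::cstar_algebra set \<Rightarrow> 'a set \<Rightarrow> bool" where
  "ofam E Q \<longleftrightarrow> finite Q \<and> Q \<subseteq> E \<and> (\<forall>q\<in>Q. proj q \<and> q \<noteq> 0) \<and>
     (\<forall>q\<in>Q. \<forall>q'\<in>Q. q \<noteq> q' \<longrightarrow> q * q' = 0) \<and> sum id Q = 1"

lemma ofam_indep:
  assumes "ofam E Q"
  shows "cv.independent Q"
proof
  assume "cv.dependent Q"
  moreover have fQ: "finite Q" using assms by (simp add: ofam_def)
  ultimately obtain u where u: "\<exists>v\<in>Q. u v \<noteq> 0" and su: "(\<Sum>v\<in>Q. scaleC (u v) v) = 0"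
    using cv.dependent_finite[OF fQ] by blast
  from u obtain q where q: "q \<in> Q" "u q \<noteq> 0" by blast
  have "0 = (\<Sum>v\<in>Q. scaleC (u v) v) * q" using su by simp
  also have "\<dots> = (\<Sum>v\<in>Q. scaleC (u v) (v * q))" by (simp add: sum_distrib_right scaleC_mult_left)
  also have "\<dots> = scaleC (u q) (q * q) + (\<Sum>v\<in>Q - {q}. scaleC (u v) (v * q))"
    by (rule sum.remove[OF fQ q(1)])
  also have "(\<Sum>v\<in>Q - {q}. scaleC (u v) (v * q)) = 0"
    using assms q by (intro sum.neutral) (auto simp: ofam_def)
  also have "scaleC (u q) (q * q) + 0 = scaleC (u q) (q * q)" by simp
  also have "\<dots> = scaleC (u q) q" using assms q by (simp add: ofam_def proj_def)
  finally show False using q assms by (auto simp: scaleC_eq_0_iff ofam_def)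
qed



definition mini :: "'a::cstar_algebra set \<Rightarrow> 'a \<Rightarrow> bool" where
  "mini E q \<longleftrightarrow> (\<forall>r\<in>E. proj r \<and> r * q = r \<longrightarrow> r = 0 \<or> r = q)"

lemma proj_left: "proj q \<Longrightarrow> proj r \<Longrightarrow> r * q = r \<Longrightarrow> q * r = r"
  by (metis adj_mult proj_def)

lemma split_fam:
  assumes E: "salg E" and Q: "ofam E Q" and q: "q \<in> Q" and r: "r \<in> E" "proj r" "r * q = r" "r \<noteq> 0" "r \<noteq> q"
  shows "ofam E (insert r (insert (q - r) (Q - {q}))) \<and> card (insert r (insert (q - r) (Q - {q}))) = Suc (card Q)"
proof -
  have fQ: "finite Q" and QE: "Q \<subseteq> E" and pQ: "\<And>x. x \<in> Q \<Longrightarrow> proj x \<and> x \<noteq> 0"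
    and oQ: "\<And>x y. x \<in> Q \<Longrightarrow> y \<in> Q \<Longrightarrow> x \<noteq> y \<Longrightarrow> x * y = 0" and sQ: "sum id Q = 1"
    using Q by (auto simp: ofam_def)
  have pq: "proj q" using pQ q by blast
  have qq: "q * q = q" "adj q = q" using pq by (auto simp: proj_def)
  have rr: "r * r = r" "adj r = r" using r by (auto simp: proj_def)
  have qr: "q * r = r" using proj_left[OF pq r(2) r(3)] .
  have d1: "r * (q - r) = 0" "(q - r) * r = 0" using rr qr r(3) by (simp_all add: algebra_simps)
  have pqr: "proj (q - r)" using rr qq qr r(3) by (simp add: proj_def algebra_simps adj_diff)
  have qr0: "q - r \<noteq> 0" using r(5) by (metis right_minus_eq)
  have o1: "r * x = 0" "x * r = 0" "(q - r) * x = 0" "x * (q - r) = 0" if x: "x \<in> Q - {q}" for x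
  proof -
    have qx: "q * x = 0" "x * q = 0" using x q oQ by auto
    show "r * x = 0" by (metis qx(1) mult.assoc mult_zero_right r(3))
    show "x * r = 0" by (metis qx(2) mult.assoc mult_zero_left qr)
    show "(q - r) * x = 0" using qx \<open>r * x = 0\<close> by (simp add: algebra_simps)
    show "x * (q - r) = 0" using qx \<open>x * r = 0\<close> by (simp add: algebra_simps)
  qed
  have rn: "r \<notin> Q - {q}"
  proof
    assume "r \<in> Q - {q}"
    then have "r * r = 0" using o1 by blast
    then show False using rr r(4) by simp
  qed
  have qrn: "q - r \<notin> Q - {q}"
  proof
    assume "q - r \<in> Q - {q}"
    then have "(q - r) * (q - r) = 0" using o1 by blast
    then show False using pqr qr0 by (simp add: proj_def)
  qed
  have rqr: "r \<noteq> q - r"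
  proof
    assume "r = q - r"
    then have "r * r = 0" using d1 by metis
    then show False using rr r(4) by simp
  qed
  have card: "card (insert r (insert (q - r) (Q - {q}))) = Suc (card Q)"
  proof -
    have "card (insert r (insert (q - r) (Q - {q}))) = Suc (Suc (card (Q - {q})))"
      using rn qrn rqr fQ by simp
    also have "card (Q - {q}) = card Q - 1" using fQ q by simp
    also have "card Q \<ge> 1" using fQ q by (metis One_nat_def Suc_leI card_gt_0_iff empty_iff)
    then have "Suc (Suc (card Q - 1)) = Suc (card Q)" by simp
    finally show ?thesis .
  qed
  have sum: "sum id (insert r (insert (q - r) (Q - {q}))) = 1"
  proof -
    have "sum id (insert r (insert (q - r) (Q - {q}))) = r + ((q - r) + sum id (Q - {q}))"
      using rn qrn rqr fQ by simp
    also have "\<dots> = q + sum id (Q - {q})" by simp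
    also have "\<dots> = sum id Q" using sum.remove[OF fQ q, of id] by simp
    finally show ?thesis using sQ by simp
  qed
  have sub: "insert r (insert (q - r) (Q - {q})) \<subseteq> E"
    using QE r(1) salg_diff[OF E, of q r] q by auto
  have prj: "\<forall>x\<in>insert r (insert (q - r) (Q - {q})). proj x \<and> x \<noteq> 0"
    using pQ r pqr qr0 by auto
  have orth: "\<forall>x\<in>insert r (insert (q - r) (Q - {q})). \<forall>y\<in>insert r (insert (q - r) (Q - {q})).
     x \<noteq> y \<longrightarrow> x * y = 0"
    using o1 d1 oQ by auto
  show ?thesis using sub prj orth sum card fQ by (simp add: ofam_def)
qed

lemma max_fam:
  fixes E :: "'a::cstar_algebra set"
  assumes F: "finite F" "E \<subseteq> cspan F" and E: "salg E"
  shows "\<exists>Q. ofam E Q \<and> (\<forall>q\<in>Q. mini E q)"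
proof -
  have one: "ofam E {1}" using E by (simp add: ofam_def proj_def salg_def)
  have bnd: "\<forall>Q. ofam E Q \<longrightarrow> card Q < Suc (card F)"
  proof (intro allI impI)
    fix Q assume Q: "ofam E Q"
    have "Q \<subseteq> E" using Q by (simp add: ofam_def)
    then show "card Q < Suc (card F)" using fd_bound[OF F _ ofam_indep[OF Q]] by auto
  qed
  obtain Q where Q: "ofam E Q" and Qmax: "\<forall>Q'. ofam E Q' \<longrightarrow> card Q' \<le> card Q"
    using ex_has_greatest_nat[of "ofam E" "{1}" card "Suc (card F)"] one bnd by blast
  have "mini E q" if q: "q \<in> Q" for q
    unfolding mini_def
  proof (intro ballI impI)
    fix r assume r: "r \<in> E" "proj r \<and> r * q = r"
    show "r = 0 \<or> r = q"
    proof (rule ccontr)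
      assume "\<not> (r = 0 \<or> r = q)"
      then have "ofam E (insert r (insert (q - r) (Q - {q}))) \<and> card (insert r (insert (q - r) (Q - {q}))) = Suc (card Q)"
        using split_fam[OF E Q q r(1)] r(2) by blast
      then have "Suc (card Q) \<le> card Q" using Qmax by metis
      then show False by simp
    qed
  qed
  then show ?thesis using Q by blast
qed

lemma mini_sa:
  fixes h q :: "'a::cstar_algebra"
  assumes F: "finite F" "E \<subseteq> cspan F" and E: "salg E"
    and q: "q \<in> E" "proj q" "q \<noteq> 0" "mini E q"
    and h: "h \<in> E" "adj h = h" "q * h = h" "h * q = h"
  shows "\<exists>c. h = scaleC c q"
proof -
  obtain p where p: "p \<noteq> 0" "ev p h = 0" using fd_annihilator[OF F E h(1)] by blast
  obtain L P where L: "finite L" and LP: "\<forall>l\<in>L. (\<exists>p. P l = ev p h) \<and> proj (P l) \<and> h * P l = scaleC l (P l)"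
    and sP: "sum P L = 1"
    using spectral[OF h(2) p] by blast
  have qq: "q * q = q" "adj q = q" using q by (auto simp: proj_def)
  have qh: "q * h = h * q" using h by simp
  have comm: "q * P l = P l * q" if "l \<in> L" for l
    using LP that ev_commute[OF qh] by metis
  have PE: "P l \<in> E" if "l \<in> L" for l using LP that salg_ev[OF E h(1)] by metis
  have cases: "q * P l = 0 \<or> q * P l = q" if l: "l \<in> L" for l
  proof -
    have pl: "P l * P l = P l" "adj (P l) = P l" using LP l by (auto simp: proj_def)
    have "proj (q * P l)"
      unfolding proj_def
    proof
      show "adj (q * P l) = q * P l" using pl qq comm[OF l] by (simp add: adj_mult)
      have "q * P l * (q * P l) = q * (P l * q) * P l" by (simp add: mult.assoc)
      also have "\<dots> = q * (q * P l) * P l" using comm[OF l] by simp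
      also have "\<dots> = q * q * (P l * P l)" by (simp add: mult.assoc)
      finally show "q * P l * (q * P l) = q * P l" using pl qq by simp
    qed
    moreover have "q * P l * q = q * P l" using comm[OF l] qq by (simp add: mult.assoc)
    moreover have "q * P l \<in> E" using salgD(4)[OF E q(1) PE[OF l]] .
    ultimately show ?thesis using q(4) unfolding mini_def by blast
  qed
  have "(\<Sum>l\<in>L. q * P l) = q" using sP by (simp add: sum_distrib_left[symmetric])
  then obtain l where l: "l \<in> L" "q * P l \<noteq> 0" using q(3) by (metis sum.neutral)
  then have qP: "q * P l = q" using cases by blast
  have "h = h * (q * P l)" using qP h by simp
  also have "\<dots> = (h * P l) * q" using comm[OF l(1)] by (simp add: mult.assoc)
  also have "\<dots> = scaleC l (q * P l)" using LP l(1) comm[OF l(1)] by (simp add: scaleC_mult_left)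
  also have "\<dots> = scaleC l q" using qP by simp
  finally show ?thesis by blast
qed

lemma mini_corner:
  fixes a q :: "'a::cstar_algebra"
  assumes F: "finite F" "E \<subseteq> cspan F" and E: "salg E"
    and q: "q \<in> E" "proj q" "q \<noteq> 0" "mini E q" and a: "a \<in> E"
  shows "\<exists>c. q * a * q = scaleC c q"
proof -
  have qq: "q * q = q" "adj q = q" using q by (auto simp: proj_def)
  define b where "b = q * a * q"
  have bE: "b \<in> E" using E q(1) a by (simp add: b_def salgD)
  have qb: "q * b = b" "b * q = b" using qq by (simp_all add: b_def mult.assoc[symmetric]) (simp add: mult.assoc)
  have ab: "adj b = q * adj a * q" using qq by (simp add: b_def adj_mult mult.assoc)
  have qab: "q * adj b = adj b" "adj b * q = adj b" using qq by (simp_all add: ab mult.assoc[symmetric]) (simp add: mult.assoc)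
  define h1 where "h1 = scaleC (1/2) (b + adj b)"
  define h2 where "h2 = scaleC (- \<i>/2) (b - adj b)"
  have h1E: "h1 \<in> E" using bE salgD[OF E] by (simp add: h1_def)
  have h2E: "h2 \<in> E" unfolding h2_def by (intro salgD(5)[OF E] salg_diff[OF E] salgD(6)[OF E] bE)
  have h1a: "adj h1 = h1" by (simp add: h1_def adj_scaleC adj_add adj_adj add.commute)
  have h2a: "adj h2 = h2"
  proof -
    have "adj h2 = scaleC (\<i>/2) (adj b - b)" by (simp add: h2_def adj_scaleC adj_diff adj_adj)
    also have "\<dots> = h2" unfolding h2_def
      by (metis minus_diff_eq scaleC_minus_left scaleC_minus_right minus_divide_left)
    finally show ?thesis .
  qed
  have h1q: "q * h1 = h1" "h1 * q = h1" using qb qab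
    by (simp_all add: h1_def scaleC_mult_left scaleC_mult_right algebra_simps)
  have h2q: "q * h2 = h2" "h2 * q = h2" using qb qab
    by (simp_all add: h2_def scaleC_mult_left scaleC_mult_right algebra_simps)
  obtain c1 where c1: "h1 = scaleC c1 q" using mini_sa[OF F E q h1E h1a h1q] by blast
  obtain c2 where c2: "h2 = scaleC c2 q" using mini_sa[OF F E q h2E h2a h2q] by blast
  have "h1 + scaleC \<i> h2 = scaleC (1/2) (b + adj b) + scaleC (1/2) (b - adj b)"
    by (simp add: h1_def h2_def scaleC_scaleC)
  also have "\<dots> = b" by (simp add: scaleC_add_right scaleC_diff_right scaleC_add_left[symmetric])
  finally have "b = scaleC (c1 + \<i> * c2) q" using c1 c2 by (simp add: scaleC_scaleC scaleC_add_left)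
  then show ?thesis by (auto simp: b_def)
qed



lemma neg_case:
  fixes q q' y :: "'a::cstar_algebra"
  assumes pq: "proj q" and pq': "proj q'" and o: "q * q' = 0" and q0: "q \<noteq> 0"
    and yq: "q * y = y" "y * q' = y" and n1: "adj y * y = - q'" and n2: "y * adj y = - q"
  shows False
proof -
  have qq: "q * q = q" "adj q = q" "q' * q' = q'" "adj q' = q'" using pq pq' by (auto simp: proj_def)
  have o': "q' * q = 0" using arg_cong[OF o, of adj] qq by (simp add: adj_mult)
  have yy: "y * y = 0"
  proof -
    have "y * y = (y * q') * (q * y)" using yq by simp
    also have "\<dots> = y * (q' * q) * y" by (simp add: mult.assoc)
    finally show ?thesis using o' by simp
  qed
  have ayay: "adj y * adj y = 0" using arg_cong[OF yy, of adj] by (simp add: adj_mult)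
  have yq0: "y * q = 0" by (metis yq(2) mult.assoc o' mult_zero_right)
  have q'y: "q' * y = 0" by (metis yq(1) mult.assoc o' mult_zero_left)
  have ayq: "adj y * q = adj y" using arg_cong[OF yq(1), of adj] qq by (simp add: adj_mult)
  have q'ay: "q' * adj y = adj y" using arg_cong[OF yq(2), of adj] qq by (simp add: adj_mult)
  have ayq': "adj y * q' = 0" using arg_cong[OF q'y, of adj] qq by (simp add: adj_mult)
  have qay: "q * adj y = 0" using arg_cong[OF yq0, of adj] qq by (simp add: adj_mult)
  define z where "z = y + adj y"
  define e where "e = q + q'"
  have ee: "e * e = e" using qq o o' by (simp add: e_def algebra_simps)
  have ae: "adj e = e" using qq by (simp add: e_def adj_add)
  have az: "adj z = z" by (simp add: z_def adj_add adj_adj add.commute)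
  have zz: "z * z = - e" using yy ayay n1 n2 by (simp add: z_def e_def algebra_simps)
  have ze: "z * e = z" using yq yq0 ayq ayq' by (simp add: z_def e_def algebra_simps)
  have ez: "e * z = z" using yq q'y q'ay qay by (simp add: z_def e_def algebra_simps)
  define w where "w = z + scaleC \<i> e"
  have aw: "adj w = z - scaleC \<i> e" using az ae by (simp add: w_def adj_add adj_scaleC scaleC_minus_left)
  have "adj w * w = (z - scaleC \<i> e) * (z + scaleC \<i> e)" unfolding aw by (simp add: w_def)
  also have "\<dots> = z * z + scaleC \<i> (z * e) - scaleC \<i> (e * z) - scaleC (\<i> * \<i>) (e * e)"
    by (simp add: algebra_simps scaleC_mult_left scaleC_mult_right scaleC_scaleC)
  also have "\<dots> = 0" using zz ze ez ee by (simp add: scaleC_minus_left scaleC_one)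
  finally have "w = 0" by (simp add: adj_mult_self_eq_0)
  then have zi: "z = - scaleC \<i> e" by (simp add: w_def eq_neg_iff_add_eq_0)
  have "adj z = scaleC \<i> e" using zi ae by (simp add: adj_scaleC scaleC_minus_left)
  then have eq: "scaleC \<i> e = - scaleC \<i> e" using az zi by simp
  then have "scaleC \<i> e + scaleC \<i> e = 0" by (metis add.right_inverse)
  then have "scaleC (2 * \<i>) e = 0" by (simp add: scaleC_add_left[symmetric])
  then have "e = 0" by (simp add: scaleC_eq_0_iff)
  then have "q * e = 0" by simp
  moreover have "q * e = q" using qq o by (simp add: e_def algebra_simps)
  ultimately show False using q0 by simp
qed

lemma scaleC_cancel_right: "scaleC a x = scaleC b x \<Longrightarrow> x \<noteq> (0::'a::cstar_algebra) \<Longrightarrow> a = b"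
  by (metis eq_iff_diff_eq_0 scaleC_diff_left scaleC_eq_0_iff)

lemma piso:
  fixes q q' a :: "'a::cstar_algebra"
  assumes F: "finite F" "E \<subseteq> cspan F" and E: "salg E"
    and q: "q \<in> E" "proj q" "q \<noteq> 0" "mini E q"
    and q': "q' \<in> E" "proj q'" "q' \<noteq> 0" "mini E q'"
    and qq': "q = q' \<or> q * q' = 0" and a: "a \<in> E" and x0: "q * a * q' \<noteq> 0"
  shows "\<exists>v\<in>E. adj v * v = q' \<and> v * adj v = q"
proof -
  have qq: "q * q = q" "adj q = q" "q' * q' = q'" "adj q' = q'" using q(2) q'(2) by (auto simp: proj_def)
  define x where "x = q * a * q'"
  have xE: "x \<in> E" using E q(1) q'(1) a by (simp add: x_def salgD)
  have qx: "q * x = x" "x * q' = x" using qq by (simp_all add: x_def mult.assoc[symmetric]) (simp add: mult.assoc)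
  have ax: "adj x = q' * adj a * q" using qq by (simp add: x_def adj_mult mult.assoc)
  have aaE: "adj a * q * a \<in> E" using E a q(1) by (simp add: salgD)
  have aaE': "a * q' * adj a \<in> E" using E a q'(1) by (simp add: salgD)
  obtain c where c: "q' * (adj a * q * a) * q' = scaleC c q'"
    using mini_corner[OF F E q' aaE] by blast
  obtain c' where c': "q * (a * q' * adj a) * q = scaleC c' q"
    using mini_corner[OF F E q aaE'] by blast
  have xx: "adj x * x = scaleC c q'"
  proof -
    have "adj x * x = q' * adj a * (q * q) * a * q'" unfolding ax by (simp add: x_def mult.assoc)
    then show ?thesis using c qq by (simp add: mult.assoc)
  qed
  have xx': "x * adj x = scaleC c' q"
  proof -
    have "x * adj x = q * a * (q' * q') * adj a * q" unfolding ax by (simp add: x_def mult.assoc)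
    then show ?thesis using c' qq by (simp add: mult.assoc)
  qed
  have x0': "x \<noteq> 0" using x0 by (simp add: x_def)
  have "x * (adj x * x) = (x * adj x) * x" by (simp add: mult.assoc)
  then have "scaleC c x = scaleC c' x" using xx xx' qx by (simp add: scaleC_mult_left scaleC_mult_right)
  then have cc: "c' = c" using scaleC_cancel_right x0' by metis
  have "adj (adj x * x) = adj x * x" by (simp add: adj_mult adj_adj)
  then have "scaleC (cnj c) q' = scaleC c q'" using xx qq by (simp add: adj_scaleC)
  then have "cnj c = c" using scaleC_cancel_right q'(3) by metis
  then obtain t where t: "c = complex_of_real t" by (metis Reals_cases Reals_cnj_iff)
  have c0: "c \<noteq> 0" using xx x0' q'(3) by (metis adj_mult_self_eq_0 scaleC_zero_left)
  then have t0: "t \<noteq> 0" using t by simp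
  show ?thesis
  proof (cases "t > 0")
    case True
    define k where "k = complex_of_real (1 / sqrt t)"
    define v where "v = scaleC k x"
    have r1: "(1 / sqrt t) * (1 / sqrt t) * t = 1" using True by (simp add: field_simps)
    have "cnj k * k * c = complex_of_real ((1 / sqrt t) * (1 / sqrt t) * t)" unfolding k_def t by (simp only: complex_cnj_complex_of_real of_real_mult)
    then have kk: "cnj k * k * c = 1" using r1 by simp
    have vE: "v \<in> E" using xE E by (simp add: v_def salgD)
    have "adj v * v = scaleC (cnj k * k * c) q'"
      by (simp add: v_def adj_scaleC scaleC_mult_left scaleC_mult_right scaleC_scaleC xx mult.commute)
    then have 1: "adj v * v = q'" using kk by (simp add: scaleC_one)
    have "v * adj v = scaleC (cnj k * k * c) q"
      by (simp add: v_def adj_scaleC scaleC_mult_left scaleC_mult_right scaleC_scaleC xx' cc mult.commute)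
    then have 2: "v * adj v = q" using kk by (simp add: scaleC_one)
    show ?thesis using vE 1 2 by blast
  next
    case False
    then have tn: "t < 0" using t0 by simp
    show ?thesis
    proof (cases "q = q'")
      case True
      obtain s where s: "q * a * q = scaleC s q" using mini_corner[OF F E q a] by blast
      have "x = scaleC s q" using s True by (simp add: x_def)
      then have "adj x * x = scaleC (cnj s * s) q" using qq by (simp add: adj_scaleC scaleC_mult_left scaleC_mult_right scaleC_scaleC)
      then have "cnj s * s = c" using xx True scaleC_cancel_right q(3) by metis
      then have "c = complex_of_real ((cmod s)^2)" using complex_norm_square[of s] by (simp only: mult.commute)
      then have "t = (cmod s)^2" using t by (metis of_real_eq_iff)
      then show ?thesis using tn by (metis not_less zero_le_power2)
    next
      case False
      then have o: "q * q' = 0" using qq' by simp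
      define k where "k = complex_of_real (1 / sqrt (- t))"
      define y where "y = scaleC k x"
      have r1: "(1 / sqrt (- t)) * (1 / sqrt (- t)) * t = -1" using tn by (simp add: field_simps)
      have "cnj k * k * c = complex_of_real ((1 / sqrt (- t)) * (1 / sqrt (- t)) * t)" unfolding k_def t by (simp only: complex_cnj_complex_of_real of_real_mult)
      then have kk: "cnj k * k * c = -1" using r1 by (simp only: of_real_minus of_real_1)
      have 1: "adj y * y = - q'"
      proof -
        have "adj y * y = scaleC (cnj k * k * c) q'"
          by (simp add: y_def adj_scaleC scaleC_mult_left scaleC_mult_right scaleC_scaleC xx mult.commute)
        then show ?thesis using kk by (simp add: scaleC_minus_left scaleC_one)
      qed
      have 2: "y * adj y = - q"
      proof -
        have "y * adj y = scaleC (cnj k * k * c) q"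
          by (simp add: y_def adj_scaleC scaleC_mult_left scaleC_mult_right scaleC_scaleC xx' cc mult.commute)
        then show ?thesis using kk by (simp add: scaleC_minus_left scaleC_one)
      qed
      have yq: "q * y = y" "y * q' = y" using qx by (simp_all add: y_def scaleC_mult_left scaleC_mult_right)
      show ?thesis using neg_case[OF q(2) q'(2) o q(3) yq 1 2] by blast
    qed
  qed
qed



lemma piso_right:
  fixes v a :: "'a::cstar_algebra"
  assumes "adj v * v = a" "proj a"
  shows "v * a = v"
proof -
  have aa: "a * a = a" "adj a = a" using assms(2) by (auto simp: proj_def)
  define d where "d = v * a - v"
  have "adj d * d = a * (adj v * v) * a - a * (adj v * v) - (adj v * v) * a + adj v * v"
    using aa by (simp add: d_def adj_diff adj_mult algebra_simps)
  also have "\<dots> = 0" using aa assms(1) by (simp add: mult.assoc)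
  finally show ?thesis by (simp add: adj_mult_self_eq_0 d_def)
qed

locale mu =
  fixes E :: "'a::cstar_algebra set" and F :: "'a set" and Q :: "'a set"
    and rep :: "'a \<Rightarrow> 'a" and w :: "'a \<Rightarrow> 'a"
  assumes F: "finite F" "E \<subseteq> cspan F" and E: "salg E"
    and Q: "ofam E Q" and Qmin: "\<And>q. q \<in> Q \<Longrightarrow> mini E q"
    and W1: "\<And>q. q \<in> Q \<Longrightarrow> rep q \<in> Q \<and> w q \<in> E \<and> adj (w q) * w q = rep q \<and> w q * adj (w q) = q"
    and W2: "\<And>q q'. q \<in> Q \<Longrightarrow> q' \<in> Q \<Longrightarrow> (\<exists>v\<in>E. adj v * v = q' \<and> v * adj v = q) \<Longrightarrow> rep q = rep q'"
begin

lemma fQ: "finite Q" and QE: "q \<in> Q \<Longrightarrow> q \<in> E" and pQ: "q \<in> Q \<Longrightarrow> proj q" and nQ: "q \<in> Q \<Longrightarrow> q \<noteq> 0"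
  and oQ: "q \<in> Q \<Longrightarrow> q' \<in> Q \<Longrightarrow> q \<noteq> q' \<Longrightarrow> q * q' = 0" and sQ: "sum id Q = 1"
  using Q by (auto simp: ofam_def)

lemma qq: "q \<in> Q \<Longrightarrow> q * q = q" "q \<in> Q \<Longrightarrow> adj q = q"
  using pQ by (auto simp: proj_def)

lemma wr: "q \<in> Q \<Longrightarrow> w q * rep q = w q"
  using piso_right W1 pQ by metis

lemma qw: "q \<in> Q \<Longrightarrow> q * w q = w q"
proof -
  assume q: "q \<in> Q"
  have "q * w q = (w q * adj (w q)) * w q" using W1[OF q] by simp
  also have "\<dots> = w q * (adj (w q) * w q)" by (simp only: mult.assoc)
  also have "\<dots> = w q * rep q" using W1[OF q] by simp
  also have "\<dots> = w q" using wr[OF q] by simp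
  finally show ?thesis .
qed

lemma rw: "q \<in> Q \<Longrightarrow> rep q * adj (w q) = adj (w q)"
proof -
  assume q: "q \<in> Q"
  have "adj (w q * rep q) = adj (w q)" using wr[OF q] by simp
  then show ?thesis using W1[OF q] qq by (simp add: adj_mult)
qed

lemma wq: "q \<in> Q \<Longrightarrow> adj (w q) * q = adj (w q)"
proof -
  assume q: "q \<in> Q"
  have "adj (q * w q) = adj (w q)" using qw[OF q] by simp
  then show ?thesis using qq[OF q] by (simp add: adj_mult)
qed

lemma ww0: "q \<in> Q \<Longrightarrow> q' \<in> Q \<Longrightarrow> q \<noteq> q' \<Longrightarrow> adj (w q) * w q' = 0"
proof -
  assume q: "q \<in> Q" "q' \<in> Q" "q \<noteq> q'"
  have "adj (w q) * w q' = (adj (w q) * q) * (q' * w q')" using wq qw q by simp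
  also have "\<dots> = adj (w q) * (q * q') * w q'" by (simp add: mult.assoc)
  finally show ?thesis using oQ q by simp
qed

lemma wq0: "q \<in> Q \<Longrightarrow> q' \<in> Q \<Longrightarrow> q \<noteq> q' \<Longrightarrow> adj (w q) * q' = 0"
proof -
  assume q: "q \<in> Q" "q' \<in> Q" "q \<noteq> q'"
  have "adj (w q) * q' = (adj (w q) * q) * q'" using wq q by simp
  also have "\<dots> = adj (w q) * (q * q')" by (simp add: mult.assoc)
  finally show ?thesis using oQ q by simp
qed

lemma qw0: "q \<in> Q \<Longrightarrow> q' \<in> Q \<Longrightarrow> q \<noteq> q' \<Longrightarrow> q' * w q = 0"
proof -
  assume q: "q \<in> Q" "q' \<in> Q" "q \<noteq> q'"
  have "q' * w q = q' * (q * w q)" using qw q by simp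
  also have "\<dots> = (q' * q) * w q" by (simp add: mult.assoc)
  finally show ?thesis using oQ q by simp
qed

definition Y :: "('a \<Rightarrow> 'a) \<Rightarrow> 'a" where
  "Y T = (\<Sum>q\<in>Q. w q * T (rep q) * adj (w q))"

lemma Y_adj: "(\<And>r. r \<in> Q \<Longrightarrow> adj (T r) = T r) \<Longrightarrow> adj (Y T) = Y T"
  unfolding Y_def using W1 by (auto simp: adj_sum adj_mult adj_adj mult.assoc intro!: sum.cong)

lemma Y_q: "q \<in> Q \<Longrightarrow> Y T * q = w q * T (rep q) * adj (w q)"
proof -
  assume q: "q \<in> Q"
  have "Y T * q = (\<Sum>q1\<in>Q. w q1 * T (rep q1) * (adj (w q1) * q))"
    by (simp add: Y_def sum_distrib_right mult.assoc)
  also have "\<dots> = w q * T (rep q) * (adj (w q) * q)"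
    using q wq0 by (subst sum.remove[OF fQ q]) (auto intro!: sum.neutral)
  finally show ?thesis using wq[OF q] by simp
qed

lemma q_Y: "q \<in> Q \<Longrightarrow> q * Y T = w q * T (rep q) * adj (w q)"
proof -
  assume q: "q \<in> Q"
  have "q * Y T = (\<Sum>q1\<in>Q. (q * w q1) * T (rep q1) * adj (w q1))"
    by (simp add: Y_def sum_distrib_left mult.assoc)
  also have "\<dots> = (q * w q) * T (rep q) * adj (w q)"
    using q qw0 by (subst sum.remove[OF fQ q]) (auto intro!: sum.neutral)
  finally show ?thesis using qw[OF q] by simp
qed

lemma Y_mult:
  assumes T: "\<And>r. r \<in> Q \<Longrightarrow> T r * r = T r"
  shows "Y T * Y T' = Y (\<lambda>r. T r * T' r)"
proof -
  have "Y T * Y T' = (\<Sum>q\<in>Q. \<Sum>q'\<in>Q. (w q * T (rep q) * adj (w q)) * (w q' * T' (rep q') * adj (w q')))"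
    by (simp add: Y_def sum_product)
  also have "\<dots> = (\<Sum>q\<in>Q. w q * (T (rep q) * T' (rep q)) * adj (w q))"
  proof (rule sum.cong[OF refl])
    fix q assume q: "q \<in> Q"
    have "(\<Sum>q'\<in>Q. (w q * T (rep q) * adj (w q)) * (w q' * T' (rep q') * adj (w q')))
        = (w q * T (rep q) * adj (w q)) * (w q * T' (rep q) * adj (w q))"
    proof (subst sum.remove[OF fQ q], rule trans[OF _ add_0_right], rule arg_cong[where f = "\<lambda>u. _ + u"])
      show "(\<Sum>q'\<in>Q - {q}. w q * T (rep q) * adj (w q) * (w q' * T' (rep q') * adj (w q'))) = 0"
      proof (rule sum.neutral, intro ballI)
        fix q' assume q': "q' \<in> Q - {q}"
        have "w q * T (rep q) * adj (w q) * (w q' * T' (rep q') * adj (w q'))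
            = w q * T (rep q) * (adj (w q) * w q') * T' (rep q') * adj (w q')" by (simp add: mult.assoc)
        moreover have "adj (w q) * w q' = 0" using ww0[OF q, of q'] q' by auto
        ultimately show "w q * T (rep q) * adj (w q) * (w q' * T' (rep q') * adj (w q')) = 0"
          by simp
      qed
    qed
    also have "\<dots> = w q * (T (rep q) * (adj (w q) * w q)) * T' (rep q) * adj (w q)"
      by (simp add: mult.assoc)
    also have "\<dots> = w q * (T (rep q) * T' (rep q)) * adj (w q)"
      using W1[OF q] T by (simp add: mult.assoc)
    finally show "(\<Sum>q'\<in>Q. (w q * T (rep q) * adj (w q)) * (w q' * T' (rep q') * adj (w q')))
        = w q * (T (rep q) * T' (rep q)) * adj (w q)" .
  qed
  finally show ?thesis by (simp add: Y_def)
qed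

lemma Y_id: "Y (\<lambda>r. r) = 1"
proof -
  have "Y (\<lambda>r. r) = (\<Sum>q\<in>Q. w q * adj (w q))"
    unfolding Y_def by (rule sum.cong[OF refl]) (use wr in \<open>simp\<close>)
  also have "\<dots> = sum id Q" using W1 by (auto intro!: sum.cong)
  finally show ?thesis using sQ by simp
qed

lemma decomp: "e = (\<Sum>q\<in>Q. \<Sum>q'\<in>Q. q * e * q')"
proof -
  have "e = sum id Q * e * sum id Q" using sQ by simp
  also have "\<dots> = (\<Sum>q\<in>Q. q * e) * (\<Sum>q'\<in>Q. q')" by (simp add: sum_distrib_right)
  also have "\<dots> = (\<Sum>q\<in>Q. \<Sum>q'\<in>Q. q * e * q')" by (rule sum_product)
  finally show ?thesis .
qed

lemma Y_comm_block:
  assumes T: "\<And>r. r \<in> Q \<Longrightarrow> T r * r = T r" "\<And>r. r \<in> Q \<Longrightarrow> r * T r = T r"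
    and q: "q \<in> Q" "q' \<in> Q" and e: "e \<in> E"
  shows "Y T * (q * e * q') = (q * e * q') * Y T"
proof (cases "q * e * q' = 0")
  case True then show ?thesis by simp
next
  case False
  have qq': "q = q' \<or> q * q' = 0" using oQ q by blast
  obtain v where "v \<in> E" "adj v * v = q'" "v * adj v = q"
    using piso[OF F E QE[OF q(1)] pQ[OF q(1)] nQ[OF q(1)] Qmin[OF q(1)]
        QE[OF q(2)] pQ[OF q(2)] nQ[OF q(2)] Qmin[OF q(2)] qq' e False] by blast
  then have rr: "rep q = rep q'" using W2 q by blast
  define r where "r = rep q"
  have rQ: "r \<in> Q" using W1 q by (simp add: r_def)
  define m where "m = adj (w q) * e * w q'"
  have mE: "m \<in> E" using W1 q e E by (simp add: m_def salgD)
  have rmr: "r * m * r = m"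
  proof -
    have "r * m * r = (rep q * adj (w q)) * e * (w q' * rep q')" using rr by (simp add: r_def m_def mult.assoc)
    then show ?thesis using rw[OF q(1)] wr[OF q(2)] by (simp add: m_def)
  qed
  obtain \<sigma> where "r * m * r = scaleC \<sigma> r"
    using mini_corner[OF F E QE[OF rQ] pQ[OF rQ] nQ[OF rQ] Qmin[OF rQ] mE] by blast
  then have m: "m = scaleC \<sigma> r" using rmr by simp
  have blk: "q * e * q' = scaleC \<sigma> (w q * adj (w q'))"
  proof -
    have "q * e * q' = (w q * adj (w q)) * e * (w q' * adj (w q'))"
      using W1[OF q(1)] W1[OF q(2)] by simp
    also have "\<dots> = w q * m * adj (w q')" by (simp add: m_def mult.assoc)
    also have "\<dots> = scaleC \<sigma> (w q * r * adj (w q'))"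
      by (simp add: m scaleC_mult_left scaleC_mult_right)
    also have "w q * r = w q" using wr[OF q(1)] by (simp add: r_def)
    finally show ?thesis .
  qed
  have "Y T * w q = w q * T r"
  proof -
    have "Y T * w q = Y T * (q * w q)" using qw[OF q(1)] by simp
    also have "\<dots> = w q * T r * (adj (w q) * w q)" using Y_q[OF q(1)] by (simp add: mult.assoc[symmetric] r_def)
    also have "\<dots> = w q * (T r * r)" using W1[OF q(1)] by (simp add: r_def mult.assoc)
    finally show ?thesis using T(1)[OF rQ] by simp
  qed
  then have L: "Y T * (q * e * q') = scaleC \<sigma> (w q * T r * adj (w q'))"
    by (simp add: blk scaleC_mult_right mult.assoc[symmetric])
  have "adj (w q') * Y T = T r * adj (w q')"
  proof -
    have "adj (w q') * Y T = adj (w q') * (q' * Y T)" using wq[OF q(2)] by (simp add: mult.assoc[symmetric])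
    also have "\<dots> = (adj (w q') * w q') * T r * adj (w q')" using q_Y[OF q(2)] rr by (simp add: mult.assoc r_def)
    also have "\<dots> = (r * T r) * adj (w q')" using W1[OF q(2)] rr by (simp add: r_def)
    finally show ?thesis using T(2)[OF rQ] by simp
  qed
  then have R: "(q * e * q') * Y T = scaleC \<sigma> (w q * T r * adj (w q'))"
  proof -
    assume a: "adj (w q') * Y T = T r * adj (w q')"
    have "(q * e * q') * Y T = scaleC \<sigma> (w q * adj (w q')) * Y T" unfolding blk ..
    also have "\<dots> = scaleC \<sigma> (w q * (adj (w q') * Y T))" by (simp add: scaleC_mult_left mult.assoc)
    also have "\<dots> = scaleC \<sigma> (w q * T r * adj (w q'))" using a by (simp add: mult.assoc)
    finally show ?thesis .
  qed
  show ?thesis using L R by simp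
qed

lemma Y_comm:
  assumes T: "\<And>r. r \<in> Q \<Longrightarrow> T r * r = T r" "\<And>r. r \<in> Q \<Longrightarrow> r * T r = T r"
    and e: "e \<in> E"
  shows "Y T * e = e * Y T"
proof -
  have "Y T * e = Y T * (\<Sum>q\<in>Q. \<Sum>q'\<in>Q. q * e * q')" using decomp[of e] by simp
  also have "\<dots> = (\<Sum>q\<in>Q. \<Sum>q'\<in>Q. Y T * (q * e * q'))" by (simp add: sum_distrib_left)
  also have "\<dots> = (\<Sum>q\<in>Q. \<Sum>q'\<in>Q. (q * e * q') * Y T)"
    using Y_comm_block[OF T _ _ e] by (auto intro!: sum.cong)
  also have "\<dots> = (\<Sum>q\<in>Q. \<Sum>q'\<in>Q. q * e * q') * Y T" by (simp add: sum_distrib_right)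
  also have "\<dots> = e * Y T" using decomp[of e] by simp
  finally show ?thesis .
qed

lemma norm_w: "q \<in> Q \<Longrightarrow> norm (w q) \<le> 1"
proof -
  assume q: "q \<in> Q"
  have "(norm (w q))^2 = norm (rep q)" using cstar_identity[of "w q"] W1[OF q] by simp
  also have "\<dots> \<le> 1" using proj_norm_le pQ W1 q by blast
  finally show ?thesis by (simp add: power_le_one_iff)
qed

lemma x_decomp:
  assumes x: "\<And>e. e \<in> E \<Longrightarrow> x * e = e * x"
  shows "x = (\<Sum>q\<in>Q. w q * (rep q * x * rep q) * adj (w q))"
proof -
  have "x = x * sum id Q" using sQ by simp
  also have "\<dots> = (\<Sum>q\<in>Q. x * q)" by (simp add: sum_distrib_left)
  also have "\<dots> = (\<Sum>q\<in>Q. w q * (rep q * x * rep q) * adj (w q))"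
  proof (rule sum.cong[OF refl])
    fix q assume q: "q \<in> Q"
    have "w q * (rep q * x * rep q) * adj (w q) = (w q * rep q) * x * (rep q * adj (w q))"
      by (simp add: mult.assoc)
    also have "\<dots> = w q * x * adj (w q)" using wr[OF q] rw[OF q] by simp
    also have "\<dots> = x * (w q * adj (w q))" using x W1[OF q] by (metis mult.assoc)
    also have "\<dots> = x * q" using W1[OF q] by simp
    finally show "x * q = w q * (rep q * x * rep q) * adj (w q)" by simp
  qed
  finally show ?thesis .
qed

end



lemma (in mu) Y_cong: "(\<And>r. r \<in> Q \<Longrightarrow> T r = T' r) \<Longrightarrow> Y T = Y T'"
  unfolding Y_def using W1 by (auto intro!: sum.cong)

theorem lemma5p1:
  fixes E :: "'a::cstar_algebra set"
  assumes "real_rank_zero (UNIV :: 'a set)"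
    and "cstar_subalgebra E"
    and "finite_dim E"
    and "1 \<in> E"
  shows "real_rank_zero (UNIV \<inter> commutant E)"
proof -
  note rr0 = assms(1)
  have E: "salg E" using assms(2,4) by (auto simp: salg_def cstar_subalgebra_def)
  obtain F where F: "finite F" "E \<subseteq> cspan F" using assms(3) by (auto simp: finite_dim_def)
  obtain Q where Q: "ofam E Q" and Qmin: "\<And>q. q \<in> Q \<Longrightarrow> mini E q" using max_fam[OF F E] by blast
  have QE: "q \<in> Q \<Longrightarrow> q \<in> E" and pQ: "q \<in> Q \<Longrightarrow> proj q" for q using Q by (auto simp: ofam_def)
  define R where "R a b \<longleftrightarrow> (\<exists>v\<in>E. adj v * v = a \<and> v * adj v = b)" for a b
  have Rrefl: "R q q" if "q \<in> Q" for q
    using QE[OF that] pQ[OF that] unfolding R_def proj_def by (intro bexI[of _ q]) auto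
  have Rsym: "R b a" if "R a b" for a b
    using that E unfolding R_def by (metis adj_adj salgD(6))
  have Rtrans: "R a c" if ab: "R a b" and bc: "R b c" and pa: "proj a" and pc: "proj c" for a b c
  proof -
    obtain v where v: "v \<in> E" "adj v * v = a" "v * adj v = b" using ab by (auto simp: R_def)
    obtain u where u: "u \<in> E" "adj u * u = b" "u * adj u = c" using bc by (auto simp: R_def)
    have aa: "a * a = a" "c * c = c" using pa pc by (auto simp: proj_def)
    have "adj (u * v) * (u * v) = adj v * (adj u * u) * v" by (simp add: adj_mult mult.assoc)
    also have "\<dots> = adj v * (v * adj v) * v" using u v by simp
    also have "\<dots> = (adj v * v) * (adj v * v)" by (simp add: mult.assoc)
    finally have 1: "adj (u * v) * (u * v) = a" using v aa by simp
    have "(u * v) * adj (u * v) = u * (v * adj v) * adj u" by (simp add: adj_mult mult.assoc)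
    also have "\<dots> = u * (adj u * u) * adj u" using u v by simp
    also have "\<dots> = (u * adj u) * (u * adj u)" by (simp add: mult.assoc)
    finally have 2: "(u * v) * adj (u * v) = c" using u aa by simp
    show ?thesis unfolding R_def using 1 2 u(1) v(1) E by (intro bexI[of _ "u * v"]) (auto intro: salgD)
  qed
  define rep where "rep q = (SOME r. r \<in> Q \<and> R r q)" for q
  define w where "w q = (SOME v. v \<in> E \<and> adj v * v = rep q \<and> v * adj v = q)" for q
  have rep1: "rep q \<in> Q \<and> R (rep q) q" if "q \<in> Q" for q
    unfolding rep_def by (rule someI[of _ q]) (use Rrefl that in blast)
  have W1: "rep q \<in> Q \<and> w q \<in> E \<and> adj (w q) * w q = rep q \<and> w q * adj (w q) = q" if q: "q \<in> Q" for q
  proof -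
    have "\<exists>v. v \<in> E \<and> adj v * v = rep q \<and> v * adj v = q" using rep1[OF q] by (auto simp: R_def)
    then have "w q \<in> E \<and> adj (w q) * w q = rep q \<and> w q * adj (w q) = q"
      unfolding w_def by (rule someI_ex)
    then show ?thesis using rep1[OF q] by blast
  qed
  have W2: "rep q = rep q'" if q: "q \<in> Q" "q' \<in> Q" and ex: "\<exists>v\<in>E. adj v * v = q' \<and> v * adj v = q" for q q'
  proof -
    have Rqq: "R q' q" using ex by (simp add: R_def)
    have "(\<lambda>r. r \<in> Q \<and> R r q) = (\<lambda>r. r \<in> Q \<and> R r q')"
    proof (rule ext, rule iffI)
      fix r assume r: "r \<in> Q \<and> R r q"
      then show "r \<in> Q \<and> R r q'" using Rtrans[of r q q'] Rsym[OF Rqq] pQ q by blast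
    next
      fix r assume r: "r \<in> Q \<and> R r q'"
      then show "r \<in> Q \<and> R r q" using Rtrans[of r q' q] Rqq pQ q by blast
    qed
    then show ?thesis unfolding rep_def by simp
  qed
  interpret mu E F Q rep w
    using F E Q Qmin W1 W2 by unfold_locales auto
  show ?thesis
    unfolding real_rank_zero_def
  proof (intro ballI impI allI)
    fix x :: 'a and \<epsilon> :: real
    assume x: "x \<in> UNIV \<inter> commutant E" and xa: "adj x = x" and ep: "\<epsilon> > 0"
    have xc: "x * e = e * x" if "e \<in> E" for e using x that by (auto simp: commutant_def)
    define \<delta> where "\<delta> = \<epsilon> / (card Q + 1)"
    have dp: "\<delta> > 0" using ep by (simp add: \<delta>_def)
    have "\<forall>r\<in>Q. \<exists>s s'. adj s = s \<and> r * s = s \<and> s * r = s \<and> r * s' = s' \<and> s' * r = s'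
            \<and> s * s' = r \<and> s' * s = r \<and> norm (r * x * r - s) < \<delta>"
    proof
      fix r assume r: "r \<in> Q"
      have rr: "r * r = r" "adj r = r" using qq r by auto
      show "\<exists>s s'. adj s = s \<and> r * s = s \<and> s * r = s \<and> r * s' = s' \<and> s' * r = s'
            \<and> s * s' = r \<and> s' * s = r \<and> norm (r * x * r - s) < \<delta>"
      proof (rule corner_rr0[OF rr0 pQ[OF r] _ _ _ dp])
        show "adj (r * x * r) = r * x * r" using rr xa by (simp add: adj_mult mult.assoc)
        show "r * (r * x * r) = r * x * r" using rr by (simp add: mult.assoc[symmetric])
        show "r * x * r * r = r * x * r" using rr by (simp add: mult.assoc)
      qed
    qed
    then obtain S where "\<forall>r\<in>Q. \<exists>s'. adj (S r) = S r \<and> r * S r = S r \<and> S r * r = S r \<and> r * s' = s' \<and> s' * r = s'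
            \<and> S r * s' = r \<and> s' * S r = r \<and> norm (r * x * r - S r) < \<delta>"
      by (metis (no_types, lifting) bchoice)
    then obtain S' where SS: "\<forall>r\<in>Q. adj (S r) = S r \<and> r * S r = S r \<and> S r * r = S r \<and> r * S' r = S' r \<and> S' r * r = S' r
            \<and> S r * S' r = r \<and> S' r * S r = r \<and> norm (r * x * r - S r) < \<delta>"
      by (metis (no_types, lifting) bchoice)
    define y where "y = Y S"
    define z where "z = Y S'"
    have ya: "adj y = y" unfolding y_def by (rule Y_adj) (use SS in blast)
    have yz: "y * z = 1"
    proof -
      have "y * z = Y (\<lambda>r. S r * S' r)" unfolding y_def z_def by (rule Y_mult) (use SS in blast)
      also have "\<dots> = Y (\<lambda>r. r)" by (rule Y_cong) (use SS in blast)
      finally show ?thesis using Y_id by simp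
    qed
    have zy: "z * y = 1"
    proof -
      have "z * y = Y (\<lambda>r. S' r * S r)" unfolding y_def z_def by (rule Y_mult) (use SS in blast)
      also have "\<dots> = Y (\<lambda>r. r)" by (rule Y_cong) (use SS in blast)
      finally show ?thesis using Y_id by simp
    qed
    have yc: "y \<in> UNIV \<inter> commutant E"
      unfolding commutant_def y_def using Y_comm[of S] SS by auto
    have zc: "z \<in> UNIV \<inter> commutant E"
      unfolding commutant_def z_def using Y_comm[of S'] SS by auto
    have "x - y = (\<Sum>q\<in>Q. w q * (rep q * x * rep q) * adj (w q)) - (\<Sum>q\<in>Q. w q * S (rep q) * adj (w q))"
      using x_decomp[OF xc] by (simp add: y_def Y_def)
    also have "\<dots> = (\<Sum>q\<in>Q. w q * (rep q * x * rep q - S (rep q)) * adj (w q))"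
      by (simp add: sum_subtractf[symmetric] algebra_simps)
    finally have xy: "x - y = (\<Sum>q\<in>Q. w q * (rep q * x * rep q - S (rep q)) * adj (w q))" .
    have "norm (x - y) \<le> (\<Sum>q\<in>Q. norm (w q * (rep q * x * rep q - S (rep q)) * adj (w q)))"
      unfolding xy by (rule norm_sum)
    also have "\<dots> \<le> (\<Sum>q\<in>Q. \<delta>)"
    proof (rule sum_mono)
      fix q assume q: "q \<in> Q"
      have rq: "rep q \<in> Q" using W1[OF q] by simp
      have "norm (w q * (rep q * x * rep q - S (rep q)) * adj (w q))
          \<le> norm (w q * (rep q * x * rep q - S (rep q))) * norm (adj (w q))" by (rule norm_mult_ineq)
      also have "\<dots> \<le> norm (w q) * norm (rep q * x * rep q - S (rep q)) * norm (adj (w q))"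
        by (intro mult_right_mono norm_mult_ineq norm_ge_zero)
      also have "\<dots> \<le> 1 * \<delta> * 1"
        using norm_w[OF q] SS rq dp by (intro mult_mono) (auto intro: less_imp_le)
      finally show "norm (w q * (rep q * x * rep q - S (rep q)) * adj (w q)) \<le> \<delta>" by simp
    qed
    also have "\<dots> = card Q * \<delta>" by simp
    also have "\<dots> < \<epsilon>"
    proof -
      have "card Q * \<delta> = \<epsilon> * (card Q / (card Q + 1))" by (simp add: \<delta>_def)
      also have "\<dots> < \<epsilon> * 1" using ep by (intro mult_strict_left_mono) auto
      finally show ?thesis by simp
    qed
    finally have nxy: "norm (x - y) < \<epsilon>" .
    show "\<exists>y\<in>UNIV \<inter> commutant E. adj y = y \<and> (\<exists>z\<in>UNIV \<inter> commutant E. y * z = 1 \<and> z * y = 1) \<and> norm (x - y) < \<epsilon>"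
      using yc ya zc yz zy nxy by blast
  qed
qed


end
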